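(* Let $\mathbb{Z} = \langle g\rangle$ act freely and cospecially on a CAT(0) cube complex $X$ by combinatorial isometries. For every vertices $x,y\in \mathrm{Min}(g)$, there exists a unique bijection between $\mathrm{Sep}(x\mid gx)$ and $\mathrm{Sep}(y\mid gy)$ which maps each hyperplane to a hyperplane in the same $\langle g\rangle$-orbit.
   Context: $\mathrm{Sep}(A\mid B)$ denotes the set of hyperplanes separating $A$ from $B$. $\mathrm{Min}(g)$ is the subcomplex spanned by the vertices $x$ minimizing the combinatorial distance $d(x,gx)$. An action is cospecial if the quotient cube complex is special in the sense of Haglund–Wise. *)

theory Defs
  imports Main "HOL-Library.FuncSet"
begin

text \<open>A CAT(0) cube complex is encoded by its 1-skeleton, a median graph
  (Chepoi / Roller / Gerasimov). Vertex set V, adjacency E.\<close>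

definition walk :: "('v \<Rightarrow> 'v \<Rightarrow> bool) \<Rightarrow> 'v list \<Rightarrow> bool" where
  "walk E xs \<longleftrightarrow> xs \<noteq> [] \<and> (\<forall>i. Suc i < length xs \<longrightarrow> E (xs ! i) (xs ! Suc i))"

definition gdist :: "('v \<Rightarrow> 'v \<Rightarrow> bool) \<Rightarrow> 'v \<Rightarrow> 'v \<Rightarrow> nat" where
  "gdist E x y = (LEAST n. \<exists>xs. walk E xs \<and> hd xs = x \<and> last xs = y \<and> length xs = Suc n)"

definition median_graph :: "'v set \<Rightarrow> ('v \<Rightarrow> 'v \<Rightarrow> bool) \<Rightarrow> bool" where
  "median_graph V E \<longleftrightarrow>
     (\<forall>a b. E a b \<longrightarrow> a \<in> V \<and> b \<in> V) \<and>
     (\<forall>a b. E a b \<longrightarrow> E b a) \<and>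
     (\<forall>a. \<not> E a a) \<and>
     (\<forall>x\<in>V. \<forall>y\<in>V. \<exists>xs. walk E xs \<and> hd xs = x \<and> last xs = y) \<and>
     (\<forall>x\<in>V. \<forall>y\<in>V. \<forall>z\<in>V. \<exists>!m. m \<in> V \<and>
        gdist E x m + gdist E m y = gdist E x y \<and>
        gdist E y m + gdist E m z = gdist E y z \<and>
        gdist E x m + gdist E m z = gdist E x z)"

definition halfspace :: "'v set \<Rightarrow> ('v \<Rightarrow> 'v \<Rightarrow> bool) \<Rightarrow> 'v \<Rightarrow> 'v \<Rightarrow> 'v set" where
  "halfspace V E a b = {x \<in> V. gdist E x a < gdist E x b}"

definition dual_hyp :: "'v set \<Rightarrow> ('v \<Rightarrow> 'v \<Rightarrow> bool) \<Rightarrow> 'v \<Rightarrow> 'v \<Rightarrow> 'v set set" where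
  "dual_hyp V E a b = {halfspace V E a b, halfspace V E b a}"

definition hyperplanes :: "'v set \<Rightarrow> ('v \<Rightarrow> 'v \<Rightarrow> bool) \<Rightarrow> 'v set set set" where
  "hyperplanes V E = {dual_hyp V E a b | a b. E a b}"

definition Sep :: "'v set \<Rightarrow> ('v \<Rightarrow> 'v \<Rightarrow> bool) \<Rightarrow> 'v \<Rightarrow> 'v \<Rightarrow> 'v set set set" where
  "Sep V E x y = {H \<in> hyperplanes V E. \<exists>A\<in>H. x \<in> A \<and> y \<notin> A}"

text \<open>Combinatorial isometry = automorphism of the 1-skeleton.\<close>
definition graph_aut :: "'v set \<Rightarrow> ('v \<Rightarrow> 'v \<Rightarrow> bool) \<Rightarrow> ('v \<Rightarrow> 'v) \<Rightarrow> bool" where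
  "graph_aut V E g \<longleftrightarrow> bij_betw g V V \<and> (\<forall>a\<in>V. \<forall>b\<in>V. E a b \<longleftrightarrow> E (g a) (g b))"

definition zpow :: "'v set \<Rightarrow> ('v \<Rightarrow> 'v) \<Rightarrow> int \<Rightarrow> 'v \<Rightarrow> 'v" where
  "zpow V g n = (if 0 \<le> n then g ^^ nat n else (inv_into V g) ^^ nat (- n))"

definition hyp_act :: "'v set \<Rightarrow> ('v \<Rightarrow> 'v) \<Rightarrow> int \<Rightarrow> 'v set set \<Rightarrow> 'v set set" where
  "hyp_act V g n H = (\<lambda>A. zpow V g n ` A) ` H"

text \<open>The action of Z = <g> is free (for a torsion-free group acting on a cube
  complex, freeness on vertices is equivalent to freeness).\<close>
definition free_Z_action :: "'v set \<Rightarrow> ('v \<Rightarrow> 'v) \<Rightarrow> bool" where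
  "free_Z_action V g \<longleftrightarrow> (\<forall>n::nat. n > 0 \<longrightarrow> (\<forall>x\<in>V. (g ^^ n) x \<noteq> x))"

definition hyp_cross :: "'v set set \<Rightarrow> 'v set set \<Rightarrow> bool" where
  "hyp_cross H1 H2 \<longleftrightarrow> H1 \<noteq> H2 \<and> (\<forall>A\<in>H1. \<forall>B\<in>H2. A \<inter> B \<noteq> {})"

definition no_square :: "'v set \<Rightarrow> ('v \<Rightarrow> 'v \<Rightarrow> bool) \<Rightarrow> 'v \<Rightarrow> 'v \<Rightarrow> 'v \<Rightarrow> bool" where
  "no_square V E v a b \<longleftrightarrow> \<not> (\<exists>c\<in>V. c \<noteq> v \<and> E a c \<and> E b c)"

text \<open>Haglund--Wise specialness of the quotient X / <g>, expressed on X: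
  no one-sided, self-intersecting, directly self-osculating or
  inter-osculating hyperplanes in the quotient.\<close>
definition cospecial :: "'v set \<Rightarrow> ('v \<Rightarrow> 'v \<Rightarrow> bool) \<Rightarrow> ('v \<Rightarrow> 'v) \<Rightarrow> bool" where
  "cospecial V E g \<longleftrightarrow>
     \<comment> \<open>two-sided\<close>
     (\<forall>H\<in>hyperplanes V E. \<forall>n. \<forall>A\<in>H. \<forall>B\<in>H. A \<noteq> B \<longrightarrow> zpow V g n ` A \<noteq> B) \<and>
     \<comment> \<open>no self-intersection\<close>
     (\<forall>H\<in>hyperplanes V E. \<forall>n. \<not> hyp_cross H (hyp_act V g n H)) \<and>
     \<comment> \<open>no direct self-osculation\<close>
     (\<forall>v a b n. E v a \<longrightarrow> E v b \<longrightarrow> a \<noteq> b \<longrightarrow> no_square V E v a b \<longrightarrow>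
        \<not> (hyp_act V g n (dual_hyp V E v a) = dual_hyp V E v b \<and>
           zpow V g n ` halfspace V E v a = halfspace V E v b)) \<and>
     \<comment> \<open>no inter-osculation\<close>
     (\<forall>v a b. E v a \<longrightarrow> E v b \<longrightarrow> a \<noteq> b \<longrightarrow> no_square V E v a b \<longrightarrow>
        (\<forall>n1. \<not> hyp_cross (dual_hyp V E v a) (hyp_act V g n1 (dual_hyp V E v b))))"

definition Min_set :: "'v set \<Rightarrow> ('v \<Rightarrow> 'v \<Rightarrow> bool) \<Rightarrow> ('v \<Rightarrow> 'v) \<Rightarrow> 'v set" where
  "Min_set V E g = {x \<in> V. \<forall>y\<in>V. gdist E x (g x) \<le> gdist E y (g y)}"

end

theory Submission
  imports Defs
begin


lemma walk_succ: "walk E xs \<longleftrightarrow> xs \<noteq> [] \<and> successively E xs"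
  by (simp add: walk_def successively_conv_nth)

locale mg =
  fixes V :: "'v set" and E :: "'v \<Rightarrow> 'v \<Rightarrow> bool"
  assumes MG: "median_graph V E"
begin

abbreviation d where "d \<equiv> gdist E"
abbreviation W where "W \<equiv> halfspace V E"

lemma E_V: "E a b \<Longrightarrow> a \<in> V \<and> b \<in> V" using MG by (simp add: median_graph_def)
lemma E_sym: "E a b \<Longrightarrow> E b a" using MG by (simp add: median_graph_def)
lemma E_irr: "\<not> E a a" using MG by (simp add: median_graph_def)
lemma conn: "x \<in> V \<Longrightarrow> y \<in> V \<Longrightarrow> \<exists>xs. walk E xs \<and> hd xs = x \<and> last xs = y"
  using MG by (simp add: median_graph_def)

lemma d_le: "walk E xs \<Longrightarrow> hd xs = x \<Longrightarrow> last xs = y \<Longrightarrow> d x y \<le> length xs - 1"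
  unfolding gdist_def
proof (rule Least_le)
  assume "walk E xs" "hd xs = x" "last xs = y"
  then show "\<exists>xsa. walk E xsa \<and> hd xsa = x \<and> last xsa = y \<and> length xsa = Suc (length xs - 1)"
    by (intro exI[of _ xs]) (auto simp: walk_def)
qed

lemma d_wit: assumes "x \<in> V" "y \<in> V"
  shows "\<exists>xs. walk E xs \<and> hd xs = x \<and> last xs = y \<and> length xs = Suc (d x y)"
proof -
  obtain xs where xs: "walk E xs" "hd xs = x" "last xs = y" using conn assms by blast
  then have "\<exists>n xs. walk E xs \<and> hd xs = x \<and> last xs = y \<and> length xs = Suc n"
    by (intro exI[of _ "length xs - 1"] exI[of _ xs]) (auto simp: walk_def)
  then show ?thesis unfolding gdist_def by (rule LeastI_ex)
qed

lemma d_refl: "d x x = 0"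
  using d_le[of "[x]" x x] by (simp add: walk_def)

lemma d_sym_le: assumes "x \<in> V" "y \<in> V" shows "d y x \<le> d x y"
proof -
  obtain xs where xs: "walk E xs" "hd xs = x" "last xs = y" "length xs = Suc (d x y)"
    using d_wit assms by blast
  have "successively E xs" using xs(1) by (simp add: walk_succ)
  then have "successively (\<lambda>x y. E y x) xs" by (rule successively_mono) (simp add: E_sym)
  then have "walk E (rev xs)" using xs(1) by (simp add: walk_succ)
  moreover have "hd (rev xs) = y" "last (rev xs) = x" using xs
    by (auto simp: hd_rev last_rev walk_def)
  ultimately show ?thesis using d_le[of "rev xs" y x] xs(4) by simp
qed

lemma d_sym: "x \<in> V \<Longrightarrow> y \<in> V \<Longrightarrow> d x y = d y x"
  using d_sym_le by (meson antisym)

lemma d_tri: assumes "x \<in> V" "y \<in> V" "z \<in> V" shows "d x z \<le> d x y + d y z"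
proof -
  obtain xs where xs: "walk E xs" "hd xs = x" "last xs = y" "length xs = Suc (d x y)"
    using d_wit assms by blast
  obtain ys where ys: "walk E ys" "hd ys = y" "last ys = z" "length ys = Suc (d y z)"
    using d_wit assms by blast
  obtain t where ys2: "ys = y # t" using ys by (cases ys) (auto simp: walk_def)
  have s: "successively E (y # t)" using ys(1) ys2 by (simp add: walk_succ)
  have st: "successively E t" using s by (cases t) auto
  have sx: "successively E xs" "xs \<noteq> []" using xs(1) by (simp_all add: walk_succ)
  have ht: "t \<noteq> [] \<Longrightarrow> E y (hd t)" using s by (cases t) auto
  have w: "walk E (xs @ t)" unfolding walk_succ successively_append_iff
    using sx st ht xs(3) by (simp, blast)
  have "hd (xs @ t) = x" using xs sx by simp
  moreover have "last (xs @ t) = z"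
  proof (cases "t = []")
    case True then show ?thesis using xs ys ys2 sx by simp
  next
    case False then show ?thesis using ys ys2 by simp
  qed
  ultimately have "d x z \<le> length (xs @ t) - 1" using d_le w by blast
  then show ?thesis using xs ys ys2 by simp
qed

lemma d_edge: "E a b \<Longrightarrow> d a b = 1"
proof -
  assume e: "E a b"
  have "walk E [a,b]" using e by (simp add: walk_succ)
  then have "d a b \<le> 1" using d_le[of "[a,b]" a b] by simp
  moreover have "d a b \<noteq> 0"
  proof
    assume "d a b = 0"
    then obtain xs where xs: "walk E xs" "hd xs = a" "last xs = b" "length xs = Suc 0"
      using d_wit[of a b] E_V[OF e] by auto
    then obtain t where "xs = [t]" by (cases xs) auto
    then have "a = b" using xs by simp
    then show False using e E_irr by simp
  qed
  ultimately show ?thesis by simp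
qed

lemma d_zero: "x \<in> V \<Longrightarrow> y \<in> V \<Longrightarrow> d x y = 0 \<Longrightarrow> x = y"
proof -
  assume a: "x \<in> V" "y \<in> V" "d x y = 0"
  then obtain xs where xs: "walk E xs" "hd xs = x" "last xs = y" "length xs = Suc 0"
    using d_wit[of x y] by auto
  then obtain t where "xs = [t]" by (cases xs) auto
  then show ?thesis using xs by simp
qed

lemma d_one: "x \<in> V \<Longrightarrow> y \<in> V \<Longrightarrow> d x y = 1 \<Longrightarrow> E x y"
proof -
  assume a: "x \<in> V" "y \<in> V" "d x y = 1"
  then obtain xs where xs: "walk E xs" "hd xs = x" "last xs = y" "length xs = Suc (Suc 0)"
    using d_wit[of x y] by auto
  then obtain u t where xs1: "xs = u # t" by (cases xs) auto
  then obtain v where "t = [v]" using xs by (cases t) auto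
  then have "xs = [u,v]" using xs1 by simp
  then show ?thesis using xs by (simp add: walk_succ)
qed

lemma d_step: assumes "x \<in> V" "y \<in> V" "d x y = Suc n"
  shows "\<exists>z. E x z \<and> d z y = n"
proof -
  obtain xs where xs: "walk E xs" "hd xs = x" "last xs = y" "length xs = Suc (Suc n)"
    using d_wit[of x y] assms by auto
  then obtain u t where xs1: "xs = u # t" by (cases xs) auto
  then obtain z zs where "t = z # zs" using xs by (cases t) auto
  then have xs2: "xs = x # z # zs" using xs1 xs by simp
  have ez: "E x z" using xs xs2 by (simp add: walk_succ)
  have "walk E (z # zs)" using xs xs2 by (simp add: walk_succ)
  then have "d z y \<le> n" using d_le[of "z#zs" z y] xs xs2 by simp
  moreover have zV: "z \<in> V" using E_V[OF ez] by simp
  moreover have "d x y \<le> d x z + d z y" using d_tri[OF assms(1) zV assms(2)] .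
  ultimately show ?thesis using ez d_edge assms by (intro exI[of _ z]) auto
qed

lemma d_adj: "E a b \<Longrightarrow> z \<in> V \<Longrightarrow> d z a \<le> d z b + 1"
  using d_tri[of z b a] d_edge[of b a] E_sym E_V by fastforce

lemma med_ex: "x \<in> V \<Longrightarrow> y \<in> V \<Longrightarrow> z \<in> V \<Longrightarrow> \<exists>m\<in>V. d x m + d m y = d x y \<and>
        d y m + d m z = d y z \<and> d x m + d m z = d x z"
  using MG unfolding median_graph_def by blast

lemma med_uniq: "x \<in> V \<Longrightarrow> y \<in> V \<Longrightarrow> z \<in> V \<Longrightarrow>
   m \<in> V \<Longrightarrow> d x m + d m y = d x y \<Longrightarrow> d y m + d m z = d y z \<Longrightarrow> d x m + d m z = d x z \<Longrightarrow>
   m' \<in> V \<Longrightarrow> d x m' + d m' y = d x y \<Longrightarrow> d y m' + d m' z = d y z \<Longrightarrow> d x m' + d m' z = d x z \<Longrightarrow>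
   m = m'"
proof -
  assume a: "x \<in> V" "y \<in> V" "z \<in> V"
   "m \<in> V" "d x m + d m y = d x y" "d y m + d m z = d y z" "d x m + d m z = d x z"
   "m' \<in> V" "d x m' + d m' y = d x y" "d y m' + d m' z = d y z" "d x m' + d m' z = d x z"
  have "\<exists>!m. m \<in> V \<and> d x m + d m y = d x y \<and> d y m + d m z = d y z \<and> d x m + d m z = d x z"
    using MG a(1-3) unfolding median_graph_def by blast
  then show "m = m'" using a by blast
qed

lemma bip: assumes "E a b" "z \<in> V" shows "d z a \<noteq> d z b"
proof
  assume eq: "d z a = d z b"
  have V: "a \<in> V" "b \<in> V" using E_V assms by auto
  obtain m where m: "m \<in> V" "d z m + d m a = d z a" "d a m + d m b = d a b" "d z m + d m b = d z b"
    using med_ex[OF assms(2) V] by blast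
  have "d a b = 1" using d_edge assms by simp
  then have "(d a m = 0 \<and> d m b = 1) \<or> (d a m = 1 \<and> d m b = 0)" using m by arith
  then show False
  proof
    assume "d a m = 0 \<and> d m b = 1"
    then have "a = m" using d_zero[OF V(1) m(1)] by simp
    then have "m = a" by simp
    then show False using m eq d_refl by (simp add: \<open>d a b = 1\<close>)
  next
    assume h: "d a m = 1 \<and> d m b = 0"
    then have "m = b" using d_zero[OF m(1) V(2)] by simp
    then show False using m eq d_refl d_sym V h by simp
  qed
qed

end

context mg begin

lemma W_mem: "z \<in> W a b \<longleftrightarrow> z \<in> V \<and> d z a < d z b" by (simp add: halfspace_def)
lemma W_sub: "W a b \<subseteq> V" by (auto simp: halfspace_def)

lemma W_compl: assumes "E a b" shows "V - W a b = W b a"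
proof -
  have "z \<in> V \<Longrightarrow> \<not> d z a < d z b \<longleftrightarrow> d z b < d z a" for z
    using bip[OF assms, of z] by linarith
  then show ?thesis by (auto simp: W_mem)
qed

lemma E_d: "E a b \<Longrightarrow> d a b = 1 \<and> d b a = 1"
  using d_edge E_sym by blast

lemma sq_half:
  assumes e: "E p q" "E p p'" "E q q'" "E p' q'" and ne: "p \<noteq> q'" "q \<noteq> p'" and z: "z \<in> W p q"
  shows "z \<in> W p' q'"
proof (rule ccontr)
  assume nz: "z \<notin> W p' q'"
  have V: "p \<in> V" "q \<in> V" "p' \<in> V" "q' \<in> V" using e E_V by auto
  have zV: "z \<in> V" and zpq: "d z p < d z q" using z W_mem by auto
  have d1: "d p q = 1" "d q p = 1" "d p p' = 1" "d p' p = 1" "d q q' = 1" "d q' q = 1"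
     "d p' q' = 1" "d q' p' = 1" using E_d[OF e(1)] E_d[OF e(2)] E_d[OF e(3)] E_d[OF e(4)] by auto
  have "d z q \<le> d z p + 1" using d_adj[OF E_sym[OF e(1)] zV] .
  then have zq: "d z q = d z p + 1" using zpq by linarith
  have "\<not> d z p' < d z q'" using nz zV W_mem by simp
  then have "d z q' < d z p'" using bip[OF e(4) zV] by linarith
  moreover have "d z p' \<le> d z p + 1" using d_adj[OF E_sym[OF e(2)] zV] .
  moreover have "d z q \<le> d z q' + 1" using d_adj[OF e(3) zV] .
  ultimately have zp': "d z p' = d z p + 1" and zq': "d z q' = d z p" using zq by linarith+
  have "d q p' \<le> d q p + d p p'" using d_tri[OF V(2) V(1) V(3)] .
  moreover have "d q p' \<noteq> 0" using d_zero[OF V(2) V(3)] ne by blast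
  moreover have "d q p' \<noteq> 1"
  proof
    assume "d q p' = 1"
    then have "E q p'" using d_one[OF V(2) V(3)] by blast
    then show False using bip[OF _ zV, of q p'] zq zp' by simp
  qed
  ultimately have qp': "d q p' = 2" using d1 by linarith
  have sy: "d p z = d z p" "d q' z = d z q'" "d q z = d z q" "d p' z = d z p'"
    using d_sym[OF V(1) zV] d_sym[OF V(4) zV] d_sym[OF V(2) zV] d_sym[OF V(3) zV] by auto
  have "p = q'"
    apply (rule med_uniq[of q p' z p q'])
    using V zV apply simp_all
    using d1 qp' sy zq zp' zq' by simp_all
  then show False using ne by simp
qed

lemma sq_eq:
  assumes e: "E p q" "E p p'" "E q q'" "E p' q'" and ne: "p \<noteq> q'" "q \<noteq> p'"
  shows "W p q = W p' q'"
proof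
  show "W p q \<subseteq> W p' q'" using sq_half[OF assms] by blast
  have "z \<in> W p' q' \<Longrightarrow> z \<in> W p q" for z
    using sq_half[OF e(4) E_sym[OF e(2)] E_sym[OF e(3)] e(1)] ne by blast
  then show "W p' q' \<subseteq> W p q" by blast
qed

lemma DW_aux:
  assumes "E a b" shows "d a p = n \<Longrightarrow> E p q \<Longrightarrow> p \<in> W a b \<Longrightarrow> q \<in> W b a \<Longrightarrow> W p q = W a b"
proof (induction n arbitrary: p q)
  case 0
  have V: "a \<in> V" "b \<in> V" "p \<in> V" "q \<in> V" using E_V[OF assms] E_V[OF 0(2)] by auto
  have "p = a" using 0(1) d_zero[OF V(1) V(3)] by simp
  have "d q p = 1" using E_d[OF 0(2)] by simp
  then have "d q b = 0" using 0(4) \<open>p = a\<close> W_mem by simp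
  then have "q = b" using d_zero[OF V(4) V(2)] by simp
  then show ?case using \<open>p = a\<close> by simp
next
  case (Suc n)
  have V: "a \<in> V" "b \<in> V" "p \<in> V" "q \<in> V" using E_V[OF assms] E_V[OF Suc.prems(2)] by auto
  have pa: "d p a = Suc n" using Suc.prems(1) d_sym[OF V(1) V(3)] by simp
  obtain p' where pp': "E p p'" and p'a: "d p' a = n" using d_step[OF V(3) V(1) pa] by blast
  have p'V: "p' \<in> V" using E_V[OF pp'] by simp
  have "d p a < d p b" using Suc.prems(3) W_mem by simp
  moreover have "d p b \<le> d p a + 1" using d_adj[OF E_sym[OF assms] V(3)] .
  ultimately have pb: "d p b = n + 2" using pa by linarith
  have qba: "d q b < d q a" using Suc.prems(4) W_mem by simp
  have "d q a \<le> d q p + d p a" using d_tri[OF V(4) V(3) V(1)] .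
  moreover have "d p b \<le> d p q + d q b" using d_tri[OF V(3) V(4) V(2)] .
  moreover have "d q p = 1" "d p q = 1" using E_d[OF Suc.prems(2)] by simp_all
  ultimately have qb: "d q b = n + 1" and qa: "d q a = n + 2" using pa pb qba by linarith+
  have "d p' b \<le> d p' a + 1" using d_adj[OF E_sym[OF assms] p'V] .
  moreover have "d p b \<le> d p p' + d p' b" using d_tri[OF V(3) p'V V(2)] .
  moreover have "d p p' = 1" "d p' p = 1" using E_d[OF pp'] by simp_all
  ultimately have p'b: "d p' b = n + 1" using pb p'a by linarith
  obtain m where m: "m \<in> V" "d p' m + d m q = d p' q" "d q m + d m b = d q b"
     "d p' m + d m b = d p' b" using med_ex[OF p'V V(4) V(2)] by blast
  have "d p' q \<le> d p' p + d p q" using d_tri[OF p'V V(3) V(4)] .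
  then have "d p' q \<le> 2" using \<open>d p q = 1\<close> \<open>d p' p = 1\<close> by linarith
  have "d q p' = d p' q" using d_sym[OF V(4) p'V] .
  have ne: "p' \<noteq> q" using p'a qa by auto
  have eqm: "d p' m = d q m" using m qb p'b by linarith
  have "d p' m \<noteq> 0"
  proof
    assume "d p' m = 0"
    then have "p' = m" "d q m = 0" using d_zero[OF p'V m(1)] eqm by auto
    then have "q = m" using d_zero[OF V(4) m(1)] by simp
    then show False using ne \<open>p' = m\<close> by simp
  qed
  moreover have "d m q = d q m" using d_sym[OF m(1) V(4)] .
  ultimately have m1: "d p' m = 1" "d q m = 1" using eqm m(2) \<open>d p' q \<le> 2\<close> by linarith+
  have mb: "d m b = n" using m m1 p'b by linarith
  have Ep'm: "E p' m" "E q m" using d_one[OF p'V m(1)] d_one[OF V(4) m(1)] m1 by simp_all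
  have "d q a \<le> d q m + d m a" using d_tri[OF V(4) m(1) V(1)] .
  then have ma: "d m a = n + 1" using qa m1 d_adj[OF assms m(1)] mb by linarith
  have "m \<in> W b a" using W_mem m ma mb by simp
  moreover have "p' \<in> W a b" using W_mem p'V p'a p'b by simp
  moreover have "d a p' = n" using p'a d_sym[OF V(1) p'V] by simp
  ultimately have IH: "W p' m = W a b" using Suc.IH Ep'm(1) by blast
  have "p \<noteq> m" using pb mb by auto
  then have "W p q = W p' m" using sq_eq[OF Suc.prems(2) pp' Ep'm(2) Ep'm(1)] ne by simp
  then show ?case using IH by simp
qed

lemma DW: "E a b \<Longrightarrow> E p q \<Longrightarrow> p \<in> W a b \<Longrightarrow> q \<in> W b a \<Longrightarrow> W p q = W a b"
  using DW_aux by blast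

end

context mg begin

definition hs :: "'v set \<Rightarrow> bool" where "hs A \<longleftrightarrow> (\<exists>a b. E a b \<and> A = W a b)"
definition hdl :: "'v set \<Rightarrow> 'v set set" where "hdl A = {A, V - A}"

lemma hs_sub: "hs A \<Longrightarrow> A \<subseteq> V" using W_sub by (auto simp: hs_def)
lemma hs_compl: "hs A \<Longrightarrow> hs (V - A)"
  unfolding hs_def using W_compl E_sym by blast
lemma W_self: "E a b \<Longrightarrow> a \<in> W a b"
  using E_V d_refl d_edge by (simp add: W_mem)
lemma hs_ne: "hs A \<Longrightarrow> A \<noteq> V - A"
  unfolding hs_def using W_self by blast
lemma hdl_compl: "A \<subseteq> V \<Longrightarrow> hdl (V - A) = hdl A"
  by (auto simp: hdl_def double_diff)
lemma hdl_eq: "hs A \<Longrightarrow> hs B \<Longrightarrow> hdl A = hdl B \<Longrightarrow> B = A \<or> B = V - A"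
  by (auto simp: hdl_def doubleton_eq_iff)
lemma dual_hdl: "E a b \<Longrightarrow> dual_hyp V E a b = hdl (W a b)"
  using W_compl by (simp add: dual_hyp_def hdl_def)
lemma hyps_char: "hyperplanes V E = {hdl A | A. hs A}"
  unfolding hyperplanes_def hs_def using dual_hdl by blast

lemma Sep_char: assumes "u \<in> V" "v \<in> V"
  shows "H \<in> Sep V E u v \<longleftrightarrow> (\<exists>A. hs A \<and> u \<in> A \<and> v \<notin> A \<and> H = hdl A)"
proof
  assume "H \<in> Sep V E u v"
  then obtain B A where B: "hs B" "H = hdl B" and A: "A \<in> H" "u \<in> A" "v \<notin> A"
    unfolding Sep_def hyps_char by blast
  then have "A = B \<or> A = V - B" by (auto simp: hdl_def)
  then show "\<exists>A. hs A \<and> u \<in> A \<and> v \<notin> A \<and> H = hdl A"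
  proof
    assume "A = B" then show ?thesis using A B by blast
  next
    assume "A = V - B"
    moreover have "hdl (V - B) = hdl B" using hdl_compl hs_sub B(1) by blast
    ultimately show ?thesis using A B hs_compl by blast
  qed
next
  assume "\<exists>A. hs A \<and> u \<in> A \<and> v \<notin> A \<and> H = hdl A"
  then obtain A where A: "hs A" "u \<in> A" "v \<notin> A" "H = hdl A" by blast
  have "H \<in> hyperplanes V E" unfolding hyps_char using A by blast
  moreover have "A \<in> H" using A by (simp add: hdl_def)
  ultimately show "H \<in> Sep V E u v" unfolding Sep_def using A by blast
qed

lemma hdl_in_Sep: assumes "hs Q" "u \<in> V" "v \<in> V" "(u \<in> Q) \<noteq> (v \<in> Q)" shows "hdl Q \<in> Sep V E u v"
proof (cases "u \<in> Q")
  case True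
  then show ?thesis using Sep_char[OF assms(2,3)] assms by blast
next
  case False
  have "hs (V - Q)" using hs_compl assms by blast
  moreover have "hdl (V - Q) = hdl Q" using hdl_compl hs_sub assms by blast
  moreover have "u \<in> V - Q" "v \<notin> V - Q" using False assms by auto
  ultimately show ?thesis using Sep_char[OF assms(2,3)] by metis
qed

lemma hdl_in_Sep_iff: "hs Q \<Longrightarrow> u \<in> V \<Longrightarrow> v \<in> V \<Longrightarrow> hdl Q \<in> Sep V E u v \<longleftrightarrow> (u \<in> Q) \<noteq> (v \<in> Q)"
proof
  assume a: "hs Q" "u \<in> V" "v \<in> V" "hdl Q \<in> Sep V E u v"
  then obtain A where A: "hs A" "u \<in> A" "v \<notin> A" "hdl Q = hdl A" using Sep_char by blast
  then have "A = Q \<or> A = V - Q" using hdl_eq a by metis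
  then show "(u \<in> Q) \<noteq> (v \<in> Q)" using A a by auto
qed (use hdl_in_Sep in blast)

lemma Sep_card_aux: "u \<in> V \<Longrightarrow> v \<in> V \<Longrightarrow> d u v = n \<Longrightarrow> finite (Sep V E u v) \<and> card (Sep V E u v) = n"
proof (induction n arbitrary: u)
  case 0
  have "u = v" using d_zero 0 by blast
  then have "Sep V E u v = {}" using Sep_char[OF 0(1,2)] by blast
  then show ?case by simp
next
  case (Suc n)
  obtain u' where uu': "E u u'" "d u' v = n" using d_step Suc.prems by blast
  have u'V: "u' \<in> V" using uu' E_V by blast
  define Q where "Q = W u u'"
  have hsQ: "hs Q" using uu' Q_def hs_def by blast
  have uQ: "u \<in> Q" using W_self uu' Q_def by blast
  have u'Q: "u' \<notin> Q" using W_self[OF E_sym[OF uu'(1)]] W_compl[OF uu'(1)] Q_def by blast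
  have "d v u' < d v u" using d_sym Suc.prems u'V uu' by simp
  then have vQ: "v \<notin> Q" using Q_def W_mem by simp
  have notin: "hdl Q \<notin> Sep V E u' v" using hdl_in_Sep_iff hsQ u'V Suc.prems u'Q vQ by blast
  have eq: "Sep V E u v = insert (hdl Q) (Sep V E u' v)"
  proof (intro equalityI subsetI)
    fix H assume "H \<in> Sep V E u v"
    then obtain A where A: "hs A" "u \<in> A" "v \<notin> A" "H = hdl A" using Sep_char Suc.prems by blast
    show "H \<in> insert (hdl Q) (Sep V E u' v)"
    proof (cases "u' \<in> A")
      case True then show ?thesis using A Sep_char u'V Suc.prems by blast
    next
      case False
      obtain a b where ab: "E a b" "A = W a b" using A hs_def by blast
      have "u' \<in> W b a" using False ab W_compl u'V by blast
      then have "W u u' = W a b" using DW[OF ab(1) uu'(1)] A ab by blast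
      then show ?thesis using A ab Q_def by simp
    qed
  next
    fix H assume H: "H \<in> insert (hdl Q) (Sep V E u' v)"
    show "H \<in> Sep V E u v"
    proof (cases "H = hdl Q")
      case True then show ?thesis using hdl_in_Sep hsQ Suc.prems uQ vQ by blast
    next
      case False
      then obtain A where A: "hs A" "u' \<in> A" "v \<notin> A" "H = hdl A" using Sep_char u'V Suc.prems H by blast
      show ?thesis
      proof (cases "u \<in> A")
        case True then show ?thesis using A Sep_char Suc.prems by blast
      next
        case False
        obtain a b where ab: "E a b" "A = W a b" using A hs_def by blast
        have "u \<in> W b a" using False ab W_compl Suc.prems by blast
        then have "W u' u = W a b" using DW[OF ab(1) E_sym[OF uu'(1)]] A ab by blast
        then have "H = hdl (V - Q)" using A ab Q_def W_compl[OF uu'(1)] by simp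
        then have "H = hdl Q" using hdl_compl hs_sub hsQ by simp
        then show ?thesis using \<open>H \<noteq> hdl Q\<close> by simp
      qed
    qed
  qed
  have "finite (Sep V E u' v) \<and> card (Sep V E u' v) = n" using Suc.IH u'V Suc.prems uu' by blast
  then show ?case using eq notin by simp
qed

lemma Sep_fin: "u \<in> V \<Longrightarrow> v \<in> V \<Longrightarrow> finite (Sep V E u v)"
  using Sep_card_aux by blast
lemma Sep_card: "u \<in> V \<Longrightarrow> v \<in> V \<Longrightarrow> card (Sep V E u v) = d u v"
  using Sep_card_aux by blast

lemma septri:
  assumes Q: "hs Q" and V: "u \<in> V" "v \<in> V" "w \<in> V"
    and s1: "(u \<in> Q) \<noteq> (v \<in> Q)" and s2: "(v \<in> Q) \<noteq> (w \<in> Q)"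
  shows "d u w + 1 \<le> d u v + d v w"
proof -
  have sub: "Sep V E u w \<subseteq> (Sep V E u v \<union> Sep V E v w) - {hdl Q}"
  proof
    fix H assume "H \<in> Sep V E u w"
    then obtain A where A: "hs A" "u \<in> A" "w \<notin> A" "H = hdl A" using Sep_char V by blast
    have "H \<noteq> hdl Q"
    proof
      assume "H = hdl Q"
      then have "A = Q \<or> A = V - Q" using hdl_eq A Q by metis
      then show False using A s1 s2 V by auto
    qed
    moreover have "H \<in> Sep V E u v \<union> Sep V E v w"
      using A Sep_char V by (cases "v \<in> A") blast+
    ultimately show "H \<in> (Sep V E u v \<union> Sep V E v w) - {hdl Q}" by blast
  qed
  have inQ: "hdl Q \<in> Sep V E u v" using hdl_in_Sep Q V s1 by blast
  have fin: "finite (Sep V E u v \<union> Sep V E v w)" using Sep_fin V by blast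
  have "card (Sep V E u w) \<le> card ((Sep V E u v \<union> Sep V E v w) - {hdl Q})"
    using card_mono[OF _ sub] fin by blast
  also have "\<dots> = card (Sep V E u v \<union> Sep V E v w) - 1" using inQ fin by simp
  also have "\<dots> \<le> card (Sep V E u v) + card (Sep V E v w) - 1"
    using card_Un_le diff_le_mono by blast
  finally have "card (Sep V E u w) \<le> card (Sep V E u v) + card (Sep V E v w) - 1" .
  moreover have "0 < card (Sep V E u v)" using inQ Sep_fin[OF V(1,2)] card_gt_0_iff by blast
  ultimately show ?thesis using Sep_card[OF V(1,2)] Sep_card[OF V(2,3)] Sep_card[OF V(1,3)] by linarith
qed

lemma convex:
  assumes "hs A" "u \<in> A" "v \<in> A" "m \<in> V" "d u m + d m v = d u v"
  shows "m \<in> A"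
proof (rule ccontr)
  assume "m \<notin> A"
  then have "d u v + 1 \<le> d u m + d m v"
    using septri[of A u m v] assms hs_sub by blast
  then show False using assms by linarith
qed

lemma sepsub:
  assumes Q: "hs Q" and V: "u \<in> V" "v \<in> V" "u' \<in> V" "v' \<in> V"
    and s1: "(u \<in> Q) \<noteq> (v \<in> Q)" and s2: "(u' \<in> Q) = (v' \<in> Q)"
    and all: "\<And>A. hs A \<Longrightarrow> (u' \<in> A) \<noteq> (v' \<in> A) \<Longrightarrow> (u \<in> A) \<noteq> (v \<in> A)"
  shows "d u' v' < d u v"
proof -
  have sub: "Sep V E u' v' \<subseteq> Sep V E u v - {hdl Q}"
  proof
    fix H assume "H \<in> Sep V E u' v'"
    then obtain A where A: "hs A" "u' \<in> A" "v' \<notin> A" "H = hdl A" using Sep_char V by blast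
    have "H \<noteq> hdl Q"
    proof
      assume "H = hdl Q"
      then have "A = Q \<or> A = V - Q" using hdl_eq A Q by metis
      then show False using A s2 V by auto
    qed
    moreover have "H \<in> Sep V E u v"
      using A all[OF A(1)] hdl_in_Sep V by auto
    ultimately show "H \<in> Sep V E u v - {hdl Q}" by blast
  qed
  have inQ: "hdl Q \<in> Sep V E u v" using hdl_in_Sep Q V s1 by blast
  have "card (Sep V E u' v') < card (Sep V E u v)"
    using psubset_card_mono[of "Sep V E u v" "Sep V E u' v'"] sub inQ Sep_fin V by blast
  then show ?thesis using Sep_card V by simp
qed

end

context mg begin

lemma walk_in_V: "walk E xs \<Longrightarrow> hd xs \<in> V \<Longrightarrow> set xs \<subseteq> V"
proof (induction xs)
  case Nil then show ?case by simp
next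
  case (Cons a xs)
  show ?case
  proof (cases xs)
    case Nil then show ?thesis using Cons by simp
  next
    case (Cons b ys)
    have "E a b" "successively E (b # ys)" using Cons.prems \<open>xs = b # ys\<close> by (simp_all add: walk_succ)
    then have "walk E xs" "hd xs \<in> V" using E_V \<open>xs = b # ys\<close> by (simp_all add: walk_succ)
    then show ?thesis using Cons.IH Cons.prems by simp
  qed
qed

lemma aut_bij: "graph_aut V E h \<Longrightarrow> bij_betw h V V" by (simp add: graph_aut_def)

lemma aut_E: assumes h: "graph_aut V E h" and a: "a \<in> V" and b: "b \<in> V"
  shows "E (h a) (h b) \<longleftrightarrow> E a b"
proof -
  have "\<forall>a\<in>V. \<forall>b\<in>V. E a b = E (h a) (h b)" using h unfolding graph_aut_def by (rule conjunct2)
  then show ?thesis using a b by simp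
qed

lemma aut_intro: assumes "bij_betw h V V" and "\<And>a b. a \<in> V \<Longrightarrow> b \<in> V \<Longrightarrow> E (h a) (h b) \<longleftrightarrow> E a b"
  shows "graph_aut V E h"
  unfolding graph_aut_def
proof (intro conjI ballI)
  show "bij_betw h V V" by fact
  fix a b assume "a \<in> V" "b \<in> V"
  then show "E a b = E (h a) (h b)" using assms(2) by simp
qed

lemma aut_d_le: assumes h: "graph_aut V E h" and V: "x \<in> V" "y \<in> V"
  shows "d (h x) (h y) \<le> d x y"
proof -
  obtain xs where xs: "walk E xs" "hd xs = x" "last xs = y" "length xs = Suc (d x y)"
    using d_wit V by blast
  have sV: "set xs \<subseteq> V" using walk_in_V xs V by simp
  have hE: "\<And>a b. a \<in> V \<Longrightarrow> b \<in> V \<Longrightarrow> E a b \<Longrightarrow> E (h a) (h b)"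
    using aut_E[OF h] by blast
  have "successively E xs" "xs \<noteq> []" using xs(1) by (simp_all add: walk_succ)
  have "successively (\<lambda>a b. E (h a) (h b)) xs"
    by (rule successively_mono[OF \<open>successively E xs\<close>]) (use hE sV in blast)
  then have "walk E (map h xs)" using \<open>xs \<noteq> []\<close> by (simp add: walk_succ successively_map)
  moreover have "hd (map h xs) = h x" "last (map h xs) = h y" using xs \<open>xs \<noteq> []\<close>
    by (simp_all add: hd_map last_map)
  ultimately have "d (h x) (h y) \<le> length (map h xs) - 1" using d_le by blast
  then show ?thesis using xs by simp
qed

lemma aut_inv: assumes h: "graph_aut V E h" shows "graph_aut V E (inv_into V h)"
proof -
  have b: "bij_betw h V V" using aut_bij[OF h] .
  have sV: "h ` V = V" using b bij_betw_imp_surj_on by blast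
  have bi: "bij_betw (inv_into V h) V V" using bij_betw_inv_into[OF b] .
  have "E (inv_into V h a) (inv_into V h b) \<longleftrightarrow> E a b" if ab: "a \<in> V" "b \<in> V" for a b
  proof -
    have iV: "inv_into V h a \<in> V" "inv_into V h b \<in> V" using bi ab bij_betwE by blast+
    have e1: "h (inv_into V h a) = a" using f_inv_into_f[of a h V] sV ab by simp
    have e2: "h (inv_into V h b) = b" using f_inv_into_f[of b h V] sV ab by simp
    have "E (h (inv_into V h a)) (h (inv_into V h b)) \<longleftrightarrow> E (inv_into V h a) (inv_into V h b)"
      using aut_E[OF h iV] .
    then show ?thesis using e1 e2 by simp
  qed
  then show ?thesis using aut_intro[OF bi] by blast
qed

lemma aut_d: "graph_aut V E h \<Longrightarrow> x \<in> V \<Longrightarrow> y \<in> V \<Longrightarrow> d (h x) (h y) = d x y"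
proof -
  assume h: "graph_aut V E h" and V: "x \<in> V" "y \<in> V"
  have b: "bij_betw h V V" using aut_bij[OF h] .
  have hV: "h x \<in> V" "h y \<in> V" using b V bij_betwE by blast+
  have "d (inv_into V h (h x)) (inv_into V h (h y)) \<le> d (h x) (h y)"
    using aut_d_le[OF aut_inv[OF h] hV] .
  moreover have "inv_into V h (h x) = x" "inv_into V h (h y) = y"
    using inv_into_f_f[OF bij_betw_imp_inj_on[OF b]] V by simp_all
  ultimately show ?thesis using aut_d_le[OF h V] by simp
qed

lemma aut_comp: assumes h1: "graph_aut V E h1" and h2: "graph_aut V E h2" shows "graph_aut V E (h1 \<circ> h2)"
proof -
  have b1: "bij_betw h1 V V" and b2: "bij_betw h2 V V" using aut_bij h1 h2 by blast+
  have "bij_betw (h1 \<circ> h2) V V" using bij_betw_trans[OF b2 b1] .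
  moreover have "E ((h1 \<circ> h2) a) ((h1 \<circ> h2) b) \<longleftrightarrow> E a b" if ab: "a \<in> V" "b \<in> V" for a b
  proof -
    have v: "h2 a \<in> V" "h2 b \<in> V" using b2 ab bij_betwE by blast+
    have e2: "E (h2 a) (h2 b) \<longleftrightarrow> E a b" using aut_E[OF h2 ab] .
    have e1: "E (h1 (h2 a)) (h1 (h2 b)) \<longleftrightarrow> E (h2 a) (h2 b)" using aut_E[OF h1 v] .
    show ?thesis unfolding comp_def using e1 e2 by simp
  qed
  ultimately show ?thesis using aut_intro by blast
qed

lemma aut_id: "graph_aut V E id"
  by (simp add: graph_aut_def)

lemma aut_pow: "graph_aut V E h \<Longrightarrow> graph_aut V E (h ^^ n)"
  by (induction n) (simp_all add: aut_id aut_comp)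

lemma aut_W: assumes h: "graph_aut V E h" and ab: "a \<in> V" "b \<in> V"
  shows "h ` W a b = W (h a) (h b)"
proof
  have b: "bij_betw h V V" using aut_bij[OF h] .
  show "h ` W a b \<subseteq> W (h a) (h b)"
  proof
    fix w assume "w \<in> h ` W a b"
    then obtain z where z: "z \<in> W a b" "w = h z" by blast
    then have zV: "z \<in> V" "d z a < d z b" using W_mem by auto
    have "h z \<in> V" using b zV(1) bij_betwE by blast
    moreover have "d (h z) (h a) = d z a" "d (h z) (h b) = d z b" using aut_d[OF h zV(1)] ab by simp_all
    ultimately show "w \<in> W (h a) (h b)" using z zV W_mem by simp
  qed
  show "W (h a) (h b) \<subseteq> h ` W a b"
  proof
    fix w assume w: "w \<in> W (h a) (h b)"
    then have wV: "w \<in> V" using W_mem by simp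
    define z where "z = inv_into V h w"
    have zV: "z \<in> V" using z_def wV bij_betw_inv_into[OF b] bij_betwE by blast
    have sV: "h ` V = V" using b bij_betw_imp_surj_on by blast
    have hz: "h z = w" using z_def wV sV f_inv_into_f[of w h V] by simp
    have "d z a < d z b" using aut_d[OF h zV ab(1)] aut_d[OF h zV ab(2)] hz w W_mem by simp
    then have "z \<in> W a b" using zV W_mem by simp
    then show "w \<in> h ` W a b" using hz by blast
  qed
qed

lemma aut_hs: assumes h: "graph_aut V E h" and A: "hs A" shows "hs (h ` A)"
proof -
  obtain a b where ab: "E a b" "A = W a b" using A hs_def by blast
  have V: "a \<in> V" "b \<in> V" using E_V ab by auto
  have "E (h a) (h b)" using aut_E[OF h V] ab by simp
  then show ?thesis using aut_W[OF h V] ab hs_def by blast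
qed

lemma aut_compl: assumes h: "graph_aut V E h" and A: "A \<subseteq> V" shows "h ` (V - A) = V - h ` A"
proof -
  have b: "bij_betw h V V" using aut_bij[OF h] .
  then have "inj_on h V" "h ` V = V" by (simp_all add: bij_betw_def)
  then show ?thesis using A by (simp add: inj_on_image_set_diff)
qed

lemma aut_mem: assumes h: "graph_aut V E h" and A: "A \<subseteq> V" and z: "z \<in> V"
  shows "h z \<in> h ` A \<longleftrightarrow> z \<in> A"
proof -
  have "inj_on h V" using aut_bij[OF h] bij_betw_def by blast
  then show ?thesis using inj_on_image_mem_iff[of h V z A] A z by simp
qed

lemma aut_V: "graph_aut V E h \<Longrightarrow> z \<in> V \<Longrightarrow> h z \<in> V"
  using bij_betwE[OF aut_bij] by blast

lemma aut_img_sub: "graph_aut V E h \<Longrightarrow> A \<subseteq> V \<Longrightarrow> h ` A \<subseteq> V"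
  using aut_V by blast

end

locale mga = mg +
  fixes g
  assumes AUT: "graph_aut V E g"
begin

abbreviation gi where "gi \<equiv> inv_into V g"
abbreviation zp where "zp \<equiv> zpow V g"

lemma gi_aut: "graph_aut V E gi" using aut_inv AUT by blast

lemma zp_aut: "graph_aut V E (zp n)"
  unfolding zpow_def using aut_pow AUT gi_aut by simp

lemma zp_V: "x \<in> V \<Longrightarrow> zp n x \<in> V" using aut_V zp_aut by blast

lemma zp0: "zp 0 = id" by (simp add: zpow_def)
lemma zp1: "zp 1 = g" by (simp add: zpow_def)

lemma g_V: "x \<in> V \<Longrightarrow> g x \<in> V" using aut_V AUT by blast
lemma gi_V: "x \<in> V \<Longrightarrow> gi x \<in> V" using aut_V gi_aut by blast
lemma g_bij: "bij_betw g V V" using aut_bij[OF AUT] .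
lemma gi_g: "x \<in> V \<Longrightarrow> gi (g x) = x"
  using inv_into_f_f[OF bij_betw_imp_inj_on[OF g_bij]] by simp
lemma g_gi: "x \<in> V \<Longrightarrow> g (gi x) = x"
  using f_inv_into_f[of x g V] bij_betw_imp_surj_on[OF g_bij] by simp

lemma gi_pow_V: "x \<in> V \<Longrightarrow> (gi ^^ k) x \<in> V"
  by (induction k) (simp_all add: gi_V)

lemma zp_succ: assumes x: "x \<in> V" shows "zp (n + 1) x = g (zp n x)"
proof (cases "0 \<le> n")
  case True
  then have "nat (n + 1) = Suc (nat n)" by simp
  then show ?thesis using True by (simp add: zpow_def)
next
  case False
  define k where "k = nat (- (n + 1))"
  have nk: "nat (- n) = Suc k" using False k_def by simp
  have "zp n x = gi ((gi ^^ k) x)" using False nk by (simp add: zpow_def)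
  moreover have "zp (n + 1) x = (gi ^^ k) x"
  proof (cases "n + 1 = 0")
    case True then show ?thesis using k_def by (simp add: zpow_def)
  next
    case False2: False
    then show ?thesis using False k_def by (simp add: zpow_def)
  qed
  ultimately show ?thesis using g_gi gi_pow_V x by simp
qed

lemma zp_pred: assumes x: "x \<in> V" shows "zp (n - 1) x = gi (zp n x)"
  using zp_succ[OF x, of "n - 1"] gi_g zp_V x by simp

lemma zp_add: "x \<in> V \<Longrightarrow> zp (m + n) x = zp m (zp n x)"
proof (induction m arbitrary: x rule: int_induct[where k = 0])
  case base then show ?case by (simp add: zp0)
next
  case (step1 i)
  have "zp (i + 1 + n) x = zp (i + n + 1) x" by (simp add: algebra_simps)
  also have "\<dots> = g (zp (i + n) x)" using zp_succ step1 by blast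
  also have "\<dots> = g (zp i (zp n x))" using step1 by simp
  also have "\<dots> = zp (i + 1) (zp n x)" using zp_succ zp_V step1 by simp
  finally show ?case .
next
  case (step2 i)
  have "zp (i - 1 + n) x = zp (i + n - 1) x" by (simp add: algebra_simps)
  also have "\<dots> = gi (zp (i + n) x)" using zp_pred step2 by blast
  also have "\<dots> = gi (zp i (zp n x))" using step2 by simp
  also have "\<dots> = zp (i - 1) (zp n x)" using zp_pred zp_V step2 by simp
  finally show ?case .
qed

lemma zp_img: "A \<subseteq> V \<Longrightarrow> zp m ` (zp n ` A) = zp (m + n) ` A"
proof -
  assume A: "A \<subseteq> V"
  have "zp m ` (zp n ` A) = (\<lambda>z. zp m (zp n z)) ` A" by (simp add: image_image)
  also have "\<dots> = zp (m + n) ` A" using zp_add A by (intro image_cong) auto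
  finally show ?thesis .
qed

lemma zp_mem: assumes A: "A \<subseteq> V" and z: "z \<in> V"
  shows "zp a z \<in> zp b ` A \<longleftrightarrow> z \<in> zp (b - a) ` A"
proof -
  have s: "zp b ` A \<subseteq> V" using aut_img_sub zp_aut A by blast
  have "zp a z \<in> zp b ` A \<longleftrightarrow> zp (- a) (zp a z) \<in> zp (- a) ` (zp b ` A)"
    using aut_mem[OF zp_aut s zp_V[OF z]] by simp
  also have "zp (- a) (zp a z) = z" using zp_add[OF z, of "- a" a] zp0 by simp
  also have "zp (- a) ` (zp b ` A) = zp (b - a) ` A" using zp_img[OF A] by simp
  finally show ?thesis .
qed

lemma zp_hs: "hs A \<Longrightarrow> hs (zp n ` A)" using aut_hs zp_aut by blast
lemma zp_compl: "A \<subseteq> V \<Longrightarrow> zp n ` (V - A) = V - zp n ` A" using aut_compl zp_aut by blast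
lemma g_hs: "hs A \<Longrightarrow> hs (g ` A)" using aut_hs AUT by blast
lemma gi_hs: "hs A \<Longrightarrow> hs (gi ` A)" using aut_hs gi_aut by blast
lemma g_compl: "A \<subseteq> V \<Longrightarrow> g ` (V - A) = V - g ` A" using aut_compl AUT by blast
lemma g_mem: "A \<subseteq> V \<Longrightarrow> z \<in> V \<Longrightarrow> g z \<in> g ` A \<longleftrightarrow> z \<in> A" using aut_mem AUT by blast
lemma g_d: "x \<in> V \<Longrightarrow> y \<in> V \<Longrightarrow> d (g x) (g y) = d x y" using aut_d AUT by blast
lemma gi_mem: "A \<subseteq> V \<Longrightarrow> z \<in> V \<Longrightarrow> z \<in> gi ` A \<longleftrightarrow> g z \<in> A"
proof -
  assume A: "A \<subseteq> V" and z: "z \<in> V"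
  have "z \<in> gi ` A \<longleftrightarrow> gi (g z) \<in> gi ` A" using gi_g z by simp
  also have "\<dots> \<longleftrightarrow> g z \<in> A" using aut_mem[OF gi_aut A g_V[OF z]] .
  finally show ?thesis .
qed
lemma g_gi_img: assumes A: "A \<subseteq> V" shows "g ` (gi ` A) = A"
proof -
  have "g ` (gi ` A) = (\<lambda>z. g (gi z)) ` A" by (simp add: image_image)
  also have "\<dots> = (\<lambda>z. z) ` A" using A g_gi by (intro image_cong) auto
  finally show ?thesis by simp
qed

end


locale mgc = mga +
  assumes CS: "cospecial V E g"
begin

lemma conv2: assumes "hs A" "u \<in> V" "v \<in> V" "m \<in> V" "(u \<in> A) = (v \<in> A)" "d u m + d m v = d u v"
  shows "(m \<in> A) = (u \<in> A)"
proof (cases "u \<in> A")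
  case True then show ?thesis using convex[OF assms(1)] assms by blast
next
  case False
  have "hs (V - A)" using hs_compl assms by blast
  moreover have "u \<in> V - A" "v \<in> V - A" using False assms by auto
  ultimately have "m \<in> V - A" using convex assms by blast
  then show ?thesis using False by blast
qed

lemma hdl_hyp: "hs P \<Longrightarrow> hdl P \<in> hyperplanes V E"
  unfolding hyps_char by blast

lemma CS_two: assumes P: "hs P" shows "zp n ` P \<noteq> V - P"
proof -
  have c: "\<forall>H\<in>hyperplanes V E. \<forall>n. \<forall>A\<in>H. \<forall>B\<in>H. A \<noteq> B \<longrightarrow> zpow V g n ` A \<noteq> B"
    using CS unfolding cospecial_def by (rule conjunct1)
  have m1: "P \<in> hdl P" and m2: "V - P \<in> hdl P" by (simp_all add: hdl_def)
  have ne: "P \<noteq> V - P" using hs_ne P by blast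
  have c1: "\<forall>n. \<forall>A\<in>hdl P. \<forall>B\<in>hdl P. A \<noteq> B \<longrightarrow> zpow V g n ` A \<noteq> B"
    using bspec[OF c hdl_hyp[OF P]] .
  have c2: "\<forall>A\<in>hdl P. \<forall>B\<in>hdl P. A \<noteq> B \<longrightarrow> zpow V g n ` A \<noteq> B" using spec[OF c1] .
  have c3: "\<forall>B\<in>hdl P. P \<noteq> B \<longrightarrow> zpow V g n ` P \<noteq> B" using bspec[OF c2 m1] .
  have c4: "P \<noteq> V - P \<longrightarrow> zpow V g n ` P \<noteq> V - P" using bspec[OF c3 m2] .
  show ?thesis using mp[OF c4 ne] .
qed

lemma hyp_act_hdl: assumes P: "hs P" shows "hyp_act V g n (hdl P) = hdl (zp n ` P)"
proof -
  have "hyp_act V g n (hdl P) = {zp n ` P, zp n ` (V - P)}" by (simp add: hyp_act_def hdl_def)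
  also have "zp n ` (V - P) = V - zp n ` P" using zp_compl hs_sub P by blast
  finally show ?thesis by (simp add: hdl_def)
qed

lemma CS_cross: assumes P: "hs P" and ne: "hdl P \<noteq> hdl (g ` P)"
  shows "\<exists>A\<in>hdl P. \<exists>B\<in>hdl (g ` P). A \<inter> B = {}"
proof -
  have c: "\<forall>H\<in>hyperplanes V E. \<forall>n. \<not> hyp_cross H (hyp_act V g n H)"
    using CS unfolding cospecial_def by (rule conjunct1[OF conjunct2])
  have "\<not> hyp_cross (hdl P) (hyp_act V g 1 (hdl P))" using spec[OF bspec[OF c hdl_hyp[OF P]]] .
  moreover have "hyp_act V g 1 (hdl P) = hdl (g ` P)" using hyp_act_hdl[OF P] zp1 by simp
  ultimately have "\<not> hyp_cross (hdl P) (hdl (g ` P))" by simp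
  then have "\<not> (\<forall>A\<in>hdl P. \<forall>B\<in>hdl (g ` P). A \<inter> B \<noteq> {})" using ne unfolding hyp_cross_def by simp
  then show ?thesis by simp
qed

lemma min_V: "x \<in> Min_set V E g \<Longrightarrow> x \<in> V" by (simp add: Min_set_def)
lemma min_le: "x \<in> Min_set V E g \<Longrightarrow> y \<in> V \<Longrightarrow> d x (g x) \<le> d y (g y)" by (simp add: Min_set_def)

lemma T1: assumes xm: "x \<in> Min_set V E g" and P: "hs P" and xP: "x \<in> P" and gxP: "g x \<notin> P"
  and nx: "x \<notin> g ` P" and w: "w \<in> V"
  shows "w \<in> P \<or> w \<in> g ` P"
proof (rule ccontr)
  assume "\<not> (w \<in> P \<or> w \<in> g ` P)"
  then have wP: "w \<notin> P" "w \<notin> g ` P" by auto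
  have xV: "x \<in> V" using min_V xm by blast
  have gxV: "g x \<in> V" using g_V xV by blast
  have PV: "P \<subseteq> V" using hs_sub P by blast
  obtain y where y: "y \<in> V" and e1: "d x y + d y (g x) = d x (g x)"
    and e2: "d (g x) y + d y w = d (g x) w" and e3: "d x y + d y w = d x w"
    using med_ex[OF xV gxV w] by blast
  have "y \<in> V - P" using convex[OF hs_compl[OF P], of "g x" w y] gxV w wP y e2 gxP by blast
  then have yP: "y \<notin> P" by blast
  have hQ: "hs (g ` P)" using g_hs P by blast
  have "y \<in> V - g ` P" using convex[OF hs_compl[OF hQ], of x w y] xV nx w wP y e3 by blast
  then have yQ: "y \<notin> g ` P" by blast
  have gxQ: "g x \<in> g ` P" using xP by blast
  have gyQ: "g y \<notin> g ` P" using g_mem[OF PV y] yP by simp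
  have gyV: "g y \<in> V" using g_V y by blast
  have "d y (g y) + 1 \<le> d y (g x) + d (g x) (g y)"
    using septri[OF hQ y gxV gyV] yQ gxQ gyQ by blast
  moreover have "d (g x) (g y) = d x y" using g_d xV y by blast
  moreover have "d x (g x) \<le> d y (g y)" using min_le xm y by blast
  ultimately show False using e1 by linarith
qed

lemma T2: assumes xm: "x \<in> Min_set V E g" and Q: "hs Q" and s0: "(x \<in> Q) \<noteq> (g x \<in> Q)"
  shows "(gi x \<in> Q) \<noteq> (g (g x) \<in> Q)"
proof
  assume s: "(gi x \<in> Q) = (g (g x) \<in> Q)"
  have xV: "x \<in> V" using min_V xm by blast
  define x0 where "x0 = gi x"
  have x0V: "x0 \<in> V" using gi_V xV x0_def by blast
  have gx0: "g x0 = x" using g_gi xV x0_def by blast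
  have gxV: "g x \<in> V" and ggxV: "g (g x) \<in> V" using g_V xV by blast+
  obtain m where mV: "m \<in> V" and e1: "d x0 m + d m x = d x0 x"
    and e2: "d x m + d m (g x) = d x (g x)" and e3: "d x0 m + d m (g x) = d x0 (g x)"
    using med_ex[OF x0V xV gxV] by blast
  have gmV: "g m \<in> V" using g_V mV by blast
  have f1: "d x (g m) + d (g m) (g x) = d x (g x)"
    using e1 g_d[OF x0V mV] g_d[OF mV xV] g_d[OF x0V xV] gx0 by simp
  have f2: "d (g x) (g m) + d (g m) (g (g x)) = d (g x) (g (g x))"
    using e2 g_d[OF xV mV] g_d[OF mV gxV] g_d[OF xV gxV] by simp
  have f3: "d x (g m) + d (g m) (g (g x)) = d x (g (g x))"
    using e3 g_d[OF x0V mV] g_d[OF mV gxV] g_d[OF x0V gxV] gx0 by simp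
  have all: "(x \<in> A) \<noteq> (g x \<in> A)" if A: "hs A" "(m \<in> A) \<noteq> (g m \<in> A)" for A
  proof
    assume eq: "(x \<in> A) = (g x \<in> A)"
    have "(m \<in> A) = (x \<in> A)" using conv2[OF A(1) xV gxV mV eq e2] .
    moreover have "(g m \<in> A) = (x \<in> A)" using conv2[OF A(1) xV gxV gmV eq f1] .
    ultimately show False using A(2) by simp
  qed
  have same: "(m \<in> Q) = (g m \<in> Q)"
  proof (cases "(x0 \<in> Q) = (x \<in> Q)")
    case True
    have "(m \<in> Q) = (x0 \<in> Q)" using conv2[OF Q x0V xV mV True e1] .
    moreover have "(x \<in> Q) = (g (g x) \<in> Q)" using True s x0_def by simp
    then have "(g m \<in> Q) = (x \<in> Q)" using conv2[OF Q xV ggxV gmV _ f3] by blast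
    ultimately show ?thesis using True by simp
  next
    case False
    then have c: "(x0 \<in> Q) = (g x \<in> Q)" using s0 by blast
    have "(m \<in> Q) = (x0 \<in> Q)" using conv2[OF Q x0V gxV mV c e3] .
    moreover have "(g x \<in> Q) = (g (g x) \<in> Q)" using c s x0_def by simp
    then have "(g m \<in> Q) = (g x \<in> Q)" using conv2[OF Q gxV ggxV gmV _ f2] by blast
    ultimately show ?thesis using c by simp
  qed
  have "d m (g m) < d x (g x)" using sepsub[OF Q xV gxV mV gmV s0 same] all by blast
  moreover have "d x (g x) \<le> d m (g m)" using min_le xm mV by blast
  ultimately show False by linarith
qed

lemma Pprime: assumes P: "hs P" and xV: "x \<in> V" and gxP: "g x \<notin> P" and ggxP: "g (g x) \<in> P"
  shows "hs (V - gi ` P) \<and> x \<in> V - gi ` P \<and> g x \<notin> V - gi ` P \<and> g ` (V - gi ` P) = V - P"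
proof -
  have PV: "P \<subseteq> V" using hs_sub P by blast
  have giPV: "gi ` P \<subseteq> V" using aut_img_sub[OF gi_aut PV] .
  have "hs (V - gi ` P)" using hs_compl gi_hs P by blast
  moreover have "x \<notin> gi ` P" using gi_mem[OF PV xV] gxP by simp
  moreover have "g x \<in> gi ` P" using gi_mem[OF PV g_V[OF xV]] ggxP by simp
  moreover have "g ` (V - gi ` P) = V - P" using g_compl[OF giPV] g_gi_img[OF PV] by simp
  ultimately show ?thesis using xV by blast
qed

lemma AX: assumes xm: "x \<in> Min_set V E g" and P: "hs P" and xP: "x \<in> P" and gxP: "g x \<notin> P"
  shows "x \<in> g ` P"
proof (rule ccontr)
  assume nx: "x \<notin> g ` P"
  have xV: "x \<in> V" using min_V xm by blast
  have gxV: "g x \<in> V" and ggxV: "g (g x) \<in> V" using g_V xV by blast+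
  have PV: "P \<subseteq> V" using hs_sub P by blast
  have t1: "\<And>w. w \<in> V \<Longrightarrow> w \<in> P \<or> w \<in> g ` P" using T1[OF xm P xP gxP nx] by blast
  have "g (g x) \<notin> g ` P" using g_mem[OF PV gxV] gxP by simp
  then have ggxP: "g (g x) \<in> P" using t1 ggxV by blast
  have pp: "hs (V - gi ` P) \<and> x \<in> V - gi ` P \<and> g x \<notin> V - gi ` P \<and> g ` (V - gi ` P) = V - P"
    using Pprime[OF P xV gxP ggxP] .
  have "x \<notin> g ` (V - gi ` P)" using pp xP by simp
  then have t1': "\<And>w. w \<in> V \<Longrightarrow> w \<in> V - gi ` P \<or> w \<in> V - P"
    using T1[OF xm, of "V - gi ` P"] pp by blast
  have "g ` P = V - P"
  proof
    show "g ` P \<subseteq> V - P"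
    proof
      fix z assume z: "z \<in> g ` P"
      then obtain u where u: "u \<in> P" "z = g u" by blast
      have uV: "u \<in> V" using u PV by blast
      have zV: "z \<in> V" using g_V uV u by blast
      have "z \<notin> P"
      proof
        assume zP: "z \<in> P"
        have "u \<in> gi ` P" using gi_mem[OF PV uV] u zP by simp
        then show False using t1'[OF uV] u by blast
      qed
      then show "z \<in> V - P" using zV by blast
    qed
    show "V - P \<subseteq> g ` P" using t1 by blast
  qed
  then show False using CS_two[OF P, of 1] zp1 by simp
qed

lemma N: assumes xm: "x \<in> Min_set V E g" and P: "hs P" and xP: "x \<in> P" and gxP: "g x \<notin> P"
  shows "P \<subseteq> g ` P"
proof -
  have xV: "x \<in> V" using min_V xm by blast
  have gxV: "g x \<in> V" and ggxV: "g (g x) \<in> V" using g_V xV by blast+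
  have PV: "P \<subseteq> V" using hs_sub P by blast
  have ax: "x \<in> g ` P" using AX[OF xm P xP gxP] .
  have gxg: "g x \<in> g ` P" using xP by blast
  have ne1: "g ` P \<noteq> P" using gxg gxP by blast
  have ne2: "g ` P \<noteq> V - P" using CS_two[OF P, of 1] zp1 by simp
  have "hdl P \<noteq> hdl (g ` P)" using hdl_eq[OF P g_hs[OF P]] ne1 ne2 by blast
  then obtain A B where AB: "A \<in> hdl P" "B \<in> hdl (g ` P)" "A \<inter> B = {}"
    using CS_cross[OF P] by blast
  have AB2: "A = P \<or> A = V - P" "B = g ` P \<or> B = V - g ` P" using AB by (auto simp: hdl_def)
  have q1: "P \<inter> g ` P \<noteq> {}" using xP ax by blast
  have q2: "(V - P) \<inter> g ` P \<noteq> {}" using gxg gxP gxV by blast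
  have "P \<inter> (V - g ` P) = {} \<or> (V - P) \<inter> (V - g ` P) = {}"
    using AB AB2 q1 q2 by auto
  then show ?thesis
  proof
    assume "P \<inter> (V - g ` P) = {}"
    then show ?thesis using PV by blast
  next
    assume q: "(V - P) \<inter> (V - g ` P) = {}"
    have "g (g x) \<notin> g ` P" using g_mem[OF PV gxV] gxP by simp
    then have ggxP: "g (g x) \<in> P" using q ggxV by blast
    have pp: "hs (V - gi ` P) \<and> x \<in> V - gi ` P \<and> g x \<notin> V - gi ` P \<and> g ` (V - gi ` P) = V - P"
      using Pprime[OF P xV gxP ggxP] .
    then have "x \<in> g ` (V - gi ` P)" using AX[OF xm, of "V - gi ` P"] by blast
    then show ?thesis using pp xP by simp
  qed
qed

end

context mgc begin

lemma zp0_img: "zp 0 ` A = A" by (simp add: zp0)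

lemma mono1: assumes xm: "x \<in> Min_set V E g" and P: "hs P" and xP: "x \<in> P" and gxP: "g x \<notin> P"
  shows "zp k ` P \<subseteq> zp (k + 1) ` P"
proof -
  have PV: "P \<subseteq> V" using hs_sub P by blast
  have "zp k ` P \<subseteq> zp k ` (g ` P)" using N[OF assms] by (rule image_mono)
  also have "zp k ` (g ` P) = zp (k + 1) ` P" using zp_img[OF PV, of k 1] zp1 by simp
  finally show ?thesis .
qed

lemma monoLE: assumes xm: "x \<in> Min_set V E g" and P: "hs P" and xP: "x \<in> P" and gxP: "g x \<notin> P"
  and kl: "k \<le> l" shows "zp k ` P \<subseteq> zp l ` P"
proof -
  have "zp k ` P \<subseteq> zp (k + int j) ` P" for j
  proof (induction j)
    case 0 then show ?case by simp
  next
    case (Suc j)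
    have "zp (k + int j) ` P \<subseteq> zp (k + int j + 1) ` P" using mono1[OF assms(1-4)] by blast
    then show ?case using Suc by (simp add: algebra_simps)
  qed
  from this[of "nat (l - k)"] show ?thesis using kl by simp
qed

lemma P1: assumes xm: "x \<in> Min_set V E g" and P: "hs P" and xP: "x \<in> P" and gxP: "g x \<notin> P"
  and sep: "(x \<in> zp n ` P) \<noteq> (g x \<in> zp n ` P)" shows "n = 0"
proof (rule ccontr)
  assume n0: "n \<noteq> 0"
  have xV: "x \<in> V" using min_V xm by blast
  have PV: "P \<subseteq> V" using hs_sub P by blast
  have gm: "(g x \<in> zp n ` P) = (x \<in> zp (n - 1) ` P)" using zp_mem[OF PV xV, of 1 n] zp1 by simp
  show False
  proof (cases "n \<ge> 1")
    case True
    have "P \<subseteq> zp (n - 1) ` P" using monoLE[OF assms(1-4), of 0 "n - 1"] True zp0_img by simp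
    moreover have "zp (n - 1) ` P \<subseteq> zp n ` P" using monoLE[OF assms(1-4), of "n - 1" n] by simp
    ultimately have "x \<in> zp (n - 1) ` P" "x \<in> zp n ` P" using xP by blast+
    then show False using sep gm by simp
  next
    case False
    then have nle: "n \<le> -1" using n0 by simp
    have "(g x \<in> zp 0 ` P) = (x \<in> zp (0 - 1) ` P)" using zp_mem[OF PV xV, of 1 0] zp1 by simp
    then have "x \<notin> zp (-1) ` P" using gxP zp0_img by simp
    moreover have "zp n ` P \<subseteq> zp (-1) ` P" using monoLE[OF assms(1-4) nle] .
    moreover have "zp (n - 1) ` P \<subseteq> zp n ` P" using monoLE[OF assms(1-4), of "n - 1" n] by simp
    ultimately have "x \<notin> zp n ` P" "x \<notin> zp (n - 1) ` P" by blast+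
    then show False using sep gm by simp
  qed
qed

lemma INJ: assumes xm: "x \<in> Min_set V E g" and P: "hs P" and xP: "x \<in> P" and gxP: "g x \<notin> P"
  and eq: "zp j ` P = zp i ` P \<or> zp j ` P = V - zp i ` P" shows "i = j"
proof -
  have xV: "x \<in> V" using min_V xm by blast
  have gxV: "g x \<in> V" using g_V xV by blast
  have PV: "P \<subseteq> V" using hs_sub P by blast
  have iPV: "zp i ` P \<subseteq> V" using aut_img_sub[OF zp_aut PV] .
  have a: "zp (- i) ` (zp j ` P) = zp (j - i) ` P" using zp_img[OF PV, of "- i" j] by simp
  have b: "zp (- i) ` (zp i ` P) = P" using zp_img[OF PV, of "- i" i] zp0_img by simp
  have c: "zp (- i) ` (V - zp i ` P) = V - P" using zp_compl[OF iPV, of "- i"] b by simp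
  have "zp (j - i) ` P = P \<or> zp (j - i) ` P = V - P"
  proof (rule disjE[OF eq])
    assume "zp j ` P = zp i ` P"
    then have "zp (- i) ` (zp j ` P) = zp (- i) ` (zp i ` P)" by simp
    then show ?thesis using a b by simp
  next
    assume "zp j ` P = V - zp i ` P"
    then have "zp (- i) ` (zp j ` P) = zp (- i) ` (V - zp i ` P)" by simp
    then show ?thesis using a c by simp
  qed
  then have "(x \<in> zp (j - i) ` P) \<noteq> (g x \<in> zp (j - i) ` P)" using xP gxP xV gxV by auto
  then have "j - i = 0" by (rule P1[OF assms(1-4)])
  then show ?thesis by simp
qed

lemma Bhs: assumes xm: "x \<in> Min_set V E g" and P: "hs P" and xP: "x \<in> P" and gxP: "g x \<notin> P"
  and y: "y \<in> V" shows "\<exists>n. y \<in> zp n ` P \<and> g y \<notin> zp n ` P"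
proof -
  have xV: "x \<in> V" using min_V xm by blast
  have gxV: "g x \<in> V" using g_V xV by blast
  have PV: "P \<subseteq> V" using hs_sub P by blast
  have hsn: "\<And>n. hs (zp n ` P)" using zp_hs P by blast
  have injf: "inj (\<lambda>j::nat. hdl (zp (s * int j) ` P))" if s: "s = 1 \<or> s = -1" for s
  proof (rule injI)
    fix i j :: nat assume "hdl (zp (s * int i) ` P) = hdl (zp (s * int j) ` P)"
    then have "zp (s * int j) ` P = zp (s * int i) ` P \<or> zp (s * int j) ` P = V - zp (s * int i) ` P"
      using hdl_eq hsn by blast
    then have "s * int i = s * int j" using INJ[OF assms(1-4)] by blast
    then show "i = j" using s by auto
  qed
  have ex1: "\<exists>k. y \<in> zp k ` P"
  proof (rule ccontr)
    assume "\<not> (\<exists>k. y \<in> zp k ` P)"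
    then have ny: "\<And>k. y \<notin> zp k ` P" by blast
    have "range (\<lambda>j::nat. hdl (zp (1 * int j) ` P)) \<subseteq> Sep V E x y"
    proof
      fix H assume "H \<in> range (\<lambda>j::nat. hdl (zp (1 * int j) ` P))"
      then obtain j :: nat where H: "H = hdl (zp (int j) ` P)" by auto
      have "P \<subseteq> zp (int j) ` P" using monoLE[OF assms(1-4), of 0 "int j"] zp0_img by simp
      then have "x \<in> zp (int j) ` P" using xP by blast
      then have "hdl (zp (int j) ` P) \<in> Sep V E x y" using hdl_in_Sep[OF hsn xV y] ny by simp
      then show "H \<in> Sep V E x y" using H by simp
    qed
    then have "finite (range (\<lambda>j::nat. hdl (zp (1 * int j) ` P)))"
      using Sep_fin[OF xV y] finite_subset by blast
    then have "finite (UNIV :: nat set)" using finite_imageD injf[of 1] by blast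
    then show False by simp
  qed
  have ex2: "\<exists>k. y \<notin> zp k ` P"
  proof (rule ccontr)
    assume "\<not> (\<exists>k. y \<notin> zp k ` P)"
    then have ny: "\<And>k. y \<in> zp k ` P" by blast
    have "range (\<lambda>j::nat. hdl (zp (-1 * int j) ` P)) \<subseteq> Sep V E y (g x)"
    proof
      fix H assume "H \<in> range (\<lambda>j::nat. hdl (zp (-1 * int j) ` P))"
      then obtain j :: nat where H: "H = hdl (zp (- int j) ` P)" by auto
      have "zp (- int j) ` P \<subseteq> P" using monoLE[OF assms(1-4), of "- int j" 0] zp0_img by simp
      then have "g x \<notin> zp (- int j) ` P" using gxP by blast
      then have "hdl (zp (- int j) ` P) \<in> Sep V E y (g x)" using hdl_in_Sep[OF hsn y gxV] ny by simp
      then show "H \<in> Sep V E y (g x)" using H by simp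
    qed
    then have "finite (range (\<lambda>j::nat. hdl (zp (-1 * int j) ` P)))"
      using Sep_fin[OF y gxV] finite_subset by blast
    then have "finite (UNIV :: nat set)" using finite_imageD injf[of "-1"] by blast
    then show False by simp
  qed
  obtain k1 where k1: "y \<in> zp k1 ` P" using ex1 by blast
  obtain k0 where k0: "y \<notin> zp k0 ` P" using ex2 by blast
  have up: "\<And>k l. k \<le> l \<Longrightarrow> y \<in> zp k ` P \<Longrightarrow> y \<in> zp l ` P"
    using monoLE[OF assms(1-4)] by blast
  have lt: "k0 < k1"
  proof (rule ccontr)
    assume "\<not> k0 < k1"
    then have "k1 \<le> k0" by simp
    then show False using up[OF _ k1] k0 by blast
  qed
  define U where "U = (\<lambda>j::nat. y \<in> zp (k0 + int j) ` P)"
  define j0 where "j0 = (LEAST j. U j)"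
  have exj: "U (nat (k1 - k0))" using k1 lt U_def by simp
  have j0: "y \<in> zp (k0 + int j0) ` P" using LeastI[of U, OF exj] j0_def U_def by simp
  have j0ne: "j0 \<noteq> 0" using j0 k0 by (cases "j0 = 0") auto
  have "\<not> U (j0 - 1)" using not_less_Least[of "j0 - 1" U] j0ne j0_def by simp
  then have "\<not> y \<in> zp (k0 + int (j0 - 1)) ` P" using U_def by simp
  moreover have "k0 + int (j0 - 1) = k0 + int j0 - 1" using j0ne by simp
  ultimately have ny: "y \<notin> zp (k0 + int j0 - 1) ` P" by (simp add: algebra_simps)
  have "(g y \<in> zp (k0 + int j0) ` P) = (y \<in> zp (k0 + int j0 - 1) ` P)"
    using zp_mem[OF PV y, of 1 "k0 + int j0"] zp1 by simp
  then show ?thesis using j0 ny by (intro exI[of _ "k0 + int j0"]) simp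
qed

lemma hyp_act_0: "hyp_act V g 0 H = H" by (simp add: hyp_act_def zp0)

lemma hyp_act_add: assumes H: "H \<in> hyperplanes V E"
  shows "hyp_act V g a (hyp_act V g b H) = hyp_act V g (a + b) H"
proof -
  obtain P where P: "hs P" "H = hdl P" using H hyps_char by blast
  have PV: "P \<subseteq> V" using hs_sub P by blast
  have "hyp_act V g a (hyp_act V g b H) = hdl (zp a ` (zp b ` P))"
    using hyp_act_hdl P zp_hs by simp
  also have "\<dots> = hdl (zp (a + b) ` P)" using zp_img[OF PV] by simp
  also have "\<dots> = hyp_act V g (a + b) H" using hyp_act_hdl P by simp
  finally show ?thesis .
qed

lemma hyp_act_hyp: "H \<in> hyperplanes V E \<Longrightarrow> hyp_act V g n H \<in> hyperplanes V E"
proof -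
  assume H: "H \<in> hyperplanes V E"
  obtain P where P: "hs P" "H = hdl P" using H hyps_char by blast
  then show ?thesis using hyp_act_hdl hdl_hyp zp_hs by simp
qed

lemma Sep_hyp: "H \<in> Sep V E u v \<Longrightarrow> H \<in> hyperplanes V E" by (simp add: Sep_def)

lemma Aprime: assumes xm: "x \<in> Min_set V E g" and H: "H \<in> Sep V E x (g x)"
  and Hn: "hyp_act V g n H \<in> Sep V E x (g x)" shows "n = 0"
proof -
  have xV: "x \<in> V" using min_V xm by blast
  have gxV: "g x \<in> V" using g_V xV by blast
  obtain P where P: "hs P" "x \<in> P" "g x \<notin> P" "H = hdl P" using Sep_char[OF xV gxV] H by blast
  have "hdl (zp n ` P) \<in> Sep V E x (g x)" using Hn hyp_act_hdl P by simp
  then have "(x \<in> zp n ` P) \<noteq> (g x \<in> zp n ` P)" using hdl_in_Sep_iff[OF zp_hs[OF P(1)] xV gxV] by simp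
  then show ?thesis by (rule P1[OF xm P(1-3)])
qed

lemma Bprime: assumes xm: "x \<in> Min_set V E g" and H: "H \<in> Sep V E x (g x)" and y: "y \<in> V"
  shows "\<exists>n. hyp_act V g n H \<in> Sep V E y (g y)"
proof -
  have xV: "x \<in> V" using min_V xm by blast
  have gxV: "g x \<in> V" using g_V xV by blast
  have gyV: "g y \<in> V" using g_V y by blast
  obtain P where P: "hs P" "x \<in> P" "g x \<notin> P" "H = hdl P" using Sep_char[OF xV gxV] H by blast
  obtain n where n: "y \<in> zp n ` P" "g y \<notin> zp n ` P" using Bhs[OF xm P(1-3) y] by blast
  have "hdl (zp n ` P) \<in> Sep V E y (g y)" using hdl_in_Sep[OF zp_hs[OF P(1)] y gyV] n by simp
  moreover have "hyp_act V g n H = hdl (zp n ` P)" using hyp_act_hdl[OF P(1), of n] P(4) by simp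
  ultimately show ?thesis by (intro exI[of _ n]) simp
qed

end


theorem lemma3p4:
  fixes V :: "'v set" and E :: "'v \<Rightarrow> 'v \<Rightarrow> bool" and g :: "'v \<Rightarrow> 'v"
    and x y :: 'v
  assumes "median_graph V E"
    and "graph_aut V E g"
    and "free_Z_action V g"
    and "cospecial V E g"
    and "x \<in> Min_set V E g" and "y \<in> Min_set V E g"
  shows "\<exists>!f. f \<in> extensional (Sep V E x (g x)) \<and>
           bij_betw f (Sep V E x (g x)) (Sep V E y (g y)) \<and>
           (\<forall>H\<in>Sep V E x (g x). \<exists>n::int. f H = hyp_act V g n H)"
proof -
  interpret M: mgc V E g
    by (intro mgc.intro mga.intro mg.intro mga_axioms.intro mgc_axioms.intro assms(1) assms(2) assms(4))
  have xm: "x \<in> Min_set V E g" and ym: "y \<in> Min_set V E g" using assms by blast+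
  have xV: "x \<in> V" and yV: "y \<in> V" using M.min_V xm ym by blast+
  define Sx where "Sx = Sep V E x (g x)"
  define Sy where "Sy = Sep V E y (g y)"
  have uniq: "K1 = K2" if H: "H \<in> Sx" and K1: "K1 = hyp_act V g n1 H" and K2: "K2 = hyp_act V g n2 H"
    and K1y: "K1 \<in> Sy" and K2y: "K2 \<in> Sy" for H K1 K2 n1 n2
  proof -
    have Hh: "H \<in> hyperplanes V E" using H M.Sep_hyp Sx_def by blast
    have "hyp_act V g (n2 - n1) K1 = hyp_act V g (n2 - n1 + n1) H" using M.hyp_act_add[OF Hh] K1 by simp
    then have e: "hyp_act V g (n2 - n1) K1 = K2" using K2 by simp
    then have "n2 - n1 = 0" using M.Aprime[OF ym, of K1 "n2 - n1"] K1y K2y Sy_def by simp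
    then show ?thesis using e M.hyp_act_0 by simp
  qed
  have ex: "\<exists>K. K \<in> Sy \<and> (\<exists>n. K = hyp_act V g n H)" if H: "H \<in> Sx" for H
    using M.Bprime[OF xm _ yV, of H] H Sx_def Sy_def by blast
  have ex1: "\<exists>!K. K \<in> Sy \<and> (\<exists>n. K = hyp_act V g n H)" if H: "H \<in> Sx" for H
    using ex[OF H] uniq[OF H] by blast
  define F where "F H = (if H \<in> Sx then (THE K. K \<in> Sy \<and> (\<exists>n. K = hyp_act V g n H)) else undefined)" for H
  have F1: "F H \<in> Sy \<and> (\<exists>n. F H = hyp_act V g n H)" if H: "H \<in> Sx" for H
    using theI'[OF ex1[OF H]] H F_def by simp
  have ext: "F \<in> extensional Sx" by (simp add: extensional_def F_def)
  have inj: "inj_on F Sx"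
  proof (rule inj_onI)
    fix H1 H2 assume H1: "H1 \<in> Sx" and H2: "H2 \<in> Sx" and eq: "F H1 = F H2"
    obtain n1 where n1: "F H1 = hyp_act V g n1 H1" using F1[OF H1] by blast
    obtain n2 where n2: "F H2 = hyp_act V g n2 H2" using F1[OF H2] by blast
    have h1: "H1 \<in> hyperplanes V E" and h2: "H2 \<in> hyperplanes V E" using H1 H2 M.Sep_hyp Sx_def by blast+
    have "hyp_act V g (- n2) (hyp_act V g n1 H1) = hyp_act V g (- n2) (hyp_act V g n2 H2)"
      using eq n1 n2 by simp
    then have e: "hyp_act V g (- n2 + n1) H1 = H2"
      using M.hyp_act_add[OF h1] M.hyp_act_add[OF h2] M.hyp_act_0 by simp
    then have "- n2 + n1 = 0" using M.Aprime[OF xm, of H1 "- n2 + n1"] H1 H2 Sx_def by simp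
    then show "H1 = H2" using e M.hyp_act_0 by simp
  qed
  have img: "F ` Sx = Sy"
  proof
    show "F ` Sx \<subseteq> Sy" using F1 by blast
    show "Sy \<subseteq> F ` Sx"
    proof
      fix K assume K: "K \<in> Sy"
      obtain n where n: "hyp_act V g n K \<in> Sx" using M.Bprime[OF ym _ xV, of K] K Sx_def Sy_def by blast
      define H where "H = hyp_act V g n K"
      have Kh: "K \<in> hyperplanes V E" using K M.Sep_hyp Sy_def by blast
      have "hyp_act V g (- n) H = K" using M.hyp_act_add[OF Kh] M.hyp_act_0 H_def by simp
      moreover have HS: "H \<in> Sx" using n H_def by simp
      ultimately have "F H = K" using uniq[OF HS] F1[OF HS] K by metis
      then show "K \<in> F ` Sx" using HS by blast
    qed
  qed
  have bij: "bij_betw F Sx Sy" using inj img by (simp add: bij_betw_def)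
  show ?thesis
  proof (rule ex1I[of _ F])
    show "F \<in> extensional (Sep V E x (g x)) \<and> bij_betw F (Sep V E x (g x)) (Sep V E y (g y)) \<and>
      (\<forall>H\<in>Sep V E x (g x). \<exists>n. F H = hyp_act V g n H)"
      using ext bij F1 Sx_def Sy_def by blast
  next
    fix f assume f: "f \<in> extensional (Sep V E x (g x)) \<and> bij_betw f (Sep V E x (g x)) (Sep V E y (g y)) \<and>
      (\<forall>H\<in>Sep V E x (g x). \<exists>n. f H = hyp_act V g n H)"
    show "f = F"
    proof
      fix H show "f H = F H"
      proof (cases "H \<in> Sx")
        case True
        have fy: "f H \<in> Sy" using f True Sx_def Sy_def bij_betwE by blast
        obtain n where n: "f H = hyp_act V g n H" using f True Sx_def by blast
        obtain m where m: "F H = hyp_act V g m H" using F1[OF True] by blast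
        show ?thesis using uniq[OF True n m fy] F1[OF True] by blast
      next
        case False
        then show ?thesis using f ext Sx_def unfolding extensional_def by simp
      qed
    qed
  qed
qed


end
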